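(* Let $A$ be a total ring of fractions, $f:A\to B$ a ring homomorphism, and $\mathfrak b$ an ideal of $B$ contained in the Jacobson radical of $B$. Let $A\bowtie^f\mathfrak b:=\{(a,f(a)+b): a\in A,\ b\in\mathfrak b\}\subseteq A\times B$. Assume at least one of the following: (a) $\mathfrak b\subseteq f(A)$; (b) $\mathfrak b$ is a torsion $A$-module (with the $A$-module structure induced by $f$). Then $A\bowtie^f\mathfrak b$ is a total ring of fractions; in particular it is a Prüfer ring.
   Context: All rings are commutative with identity. A ring is a total ring of fractions if every element is either a unit or a zerodivisor. $\mathfrak b$ is an $A$-module via $a\cdot x:=f(a)x$; it is torsion if every $x\in\mathfrak b$ is annihilated by some non-zerodivisor of $A$. A ring is a Prüfer ring if every finitely generated ideal containing a non-zerodivisor is invertible. *)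

theory Defs
  imports "HOL-Algebra.Chinese_Remainder" "HOL-Algebra.Ideal_Product"
begin

definition zerodivisor :: "('a, 'b) ring_scheme \<Rightarrow> 'a \<Rightarrow> bool" where
  "zerodivisor R x \<longleftrightarrow> x \<in> carrier R \<and>
     (\<exists>y \<in> carrier R. y \<noteq> \<zero>\<^bsub>R\<^esub> \<and> x \<otimes>\<^bsub>R\<^esub> y = \<zero>\<^bsub>R\<^esub>)"

definition non_zerodivisor :: "('a, 'b) ring_scheme \<Rightarrow> 'a \<Rightarrow> bool" where
  "non_zerodivisor R x \<longleftrightarrow> x \<in> carrier R \<and>
     (\<forall>y \<in> carrier R. x \<otimes>\<^bsub>R\<^esub> y = \<zero>\<^bsub>R\<^esub> \<longrightarrow> y = \<zero>\<^bsub>R\<^esub>)"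

definition total_ring_of_fractions :: "('a, 'b) ring_scheme \<Rightarrow> bool" where
  "total_ring_of_fractions R \<longleftrightarrow> cring R \<and>
     (\<forall>x \<in> carrier R. x \<in> Units R \<or> zerodivisor R x)"

definition jacobson_radical :: "('a, 'b) ring_scheme \<Rightarrow> 'a set" where
  "jacobson_radical R = \<Inter> {M. maximalideal M R}"

definition amalgamation ::
  "('a, 'c) ring_scheme \<Rightarrow> ('b, 'd) ring_scheme \<Rightarrow> ('a \<Rightarrow> 'b) \<Rightarrow> 'b set \<Rightarrow> ('a \<times> 'b) ring" where
  "amalgamation A B f J = (RDirProd A B)
     \<lparr> carrier := {(a, f a \<oplus>\<^bsub>B\<^esub> j) | a j. a \<in> carrier A \<and> j \<in> J} \<rparr>"

definition torsion_via :: "('a, 'c) ring_scheme \<Rightarrow> ('b, 'd) ring_scheme \<Rightarrow> ('a \<Rightarrow> 'b) \<Rightarrow> 'b set \<Rightarrow> bool" where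
  "torsion_via A B f J \<longleftrightarrow>
     (\<forall>x \<in> J. \<exists>s. non_zerodivisor A s \<and> f s \<otimes>\<^bsub>B\<^esub> x = \<zero>\<^bsub>B\<^esub>)"

text \<open>Invertible ideal, via the standard description without fractions:
  I J = dR for some ideal J and some non-zerodivisor d (then d^{-1} J is the inverse
  of I inside the total quotient ring).\<close>
definition invertible_ideal :: "('a, 'b) ring_scheme \<Rightarrow> 'a set \<Rightarrow> bool" where
  "invertible_ideal R I \<longleftrightarrow>
     (\<exists>J d. ideal J R \<and> non_zerodivisor R d \<and> I \<cdot>\<^bsub>R\<^esub> J = PIdl\<^bsub>R\<^esub> d)"

definition pruefer_ring :: "('a, 'b) ring_scheme \<Rightarrow> bool" where
  "pruefer_ring R \<longleftrightarrow> cring R \<and>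
     (\<forall>I. ideal I R \<and> (\<exists>S. finite S \<and> S \<subseteq> carrier R \<and> I = Idl\<^bsub>R\<^esub> S)
          \<and> (\<exists>d \<in> I. non_zerodivisor R d) \<longrightarrow> invertible_ideal R I)"

end

theory Submission imports Defs "HOL-Algebra.Subrings" "HOL-Algebra.Ring_Divisibility" begin

lemma RDP_ops:
  "(a, b) \<otimes>\<^bsub>RDirProd A B\<^esub> (c, d) = (a \<otimes>\<^bsub>A\<^esub> c, b \<otimes>\<^bsub>B\<^esub> d)"
  "(a, b) \<oplus>\<^bsub>RDirProd A B\<^esub> (c, d) = (a \<oplus>\<^bsub>A\<^esub> c, b \<oplus>\<^bsub>B\<^esub> d)"
  "\<zero>\<^bsub>RDirProd A B\<^esub> = (\<zero>\<^bsub>A\<^esub>, \<zero>\<^bsub>B\<^esub>)"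
  "\<one>\<^bsub>RDirProd A B\<^esub> = (\<one>\<^bsub>A\<^esub>, \<one>\<^bsub>B\<^esub>)"
  by (simp_all add: RDirProd_def DirProd_def monoid.defs)

lemma RDP_minus:
  assumes "ring A" "ring B" "a \<in> carrier A" "b \<in> carrier B"
  shows "\<ominus>\<^bsub>RDirProd A B\<^esub> (a, b) = (\<ominus>\<^bsub>A\<^esub> a, \<ominus>\<^bsub>B\<^esub> b)"
proof -
  interpret P: ring "RDirProd A B" using RDirProd_ring assms by blast
  interpret A: ring A by fact
  interpret B: ring B by fact
  show ?thesis
    by (rule P.minus_equality) (simp_all add: RDP_ops RDirProd_carrier assms A.l_neg B.l_neg)
qed

lemma amalg_simps:
  "carrier (amalgamation A B f J) = {(a, f a \<oplus>\<^bsub>B\<^esub> j) | a j. a \<in> carrier A \<and> j \<in> J}"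
  "monoid.mult (amalgamation A B f J) = monoid.mult (RDirProd A B)"
  "add (amalgamation A B f J) = add (RDirProd A B)"
  "zero (amalgamation A B f J) = zero (RDirProd A B)"
  "one (amalgamation A B f J) = one (RDirProd A B)"
  by (simp_all add: amalgamation_def)

lemma amalg_eq: "amalgamation A B f J = (RDirProd A B) \<lparr> carrier := carrier (amalgamation A B f J) \<rparr>"
  by (simp add: amalgamation_def)

lemma amalg_cring:
  assumes "cring A" "cring B" "f \<in> ring_hom A B" "ideal J B"
  shows "cring (amalgamation A B f J)"
proof -
  interpret A: cring A by fact
  interpret B: cring B by fact
  interpret f: ring_hom_cring A B f unfolding ring_hom_cring_def ring_hom_cring_axioms_def using assms by blast
  interpret J: ideal J B by fact
  interpret P: ring "RDirProd A B" using RDirProd_ring A.ring_axioms B.ring_axioms by blast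
  let ?S = "carrier (amalgamation A B f J)"
  have sub: "?S \<subseteq> carrier (RDirProd A B)"
    by (auto simp: amalg_simps RDirProd_carrier)
  have "subcring ?S (RDirProd A B)"
  proof (rule P.subcringI[OF P.subringI])
    show "?S \<subseteq> carrier (RDirProd A B)" by fact
    show "\<one>\<^bsub>RDirProd A B\<^esub> \<in> ?S"
      by (auto simp: amalg_simps RDP_ops intro!: exI[of _ "\<zero>\<^bsub>B\<^esub>"] additive_subgroup.zero_closed[OF ideal.axioms(1)[OF assms(4)]])
    fix h assume "h \<in> ?S"
    then obtain a j where h: "h = (a, f a \<oplus>\<^bsub>B\<^esub> j)" "a \<in> carrier A" "j \<in> J"
      by (auto simp: amalg_simps)
    have jc: "j \<in> carrier B" using h J.Icarr by blast
    have "\<ominus>\<^bsub>RDirProd A B\<^esub> h = (\<ominus>\<^bsub>A\<^esub> a, f (\<ominus>\<^bsub>A\<^esub> a) \<oplus>\<^bsub>B\<^esub> (\<ominus>\<^bsub>B\<^esub> j))"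
      using h jc by (simp add: RDP_minus A.ring_axioms B.ring_axioms B.minus_add)
    then show "\<ominus>\<^bsub>RDirProd A B\<^esub> h \<in> ?S"
      using h by (auto simp: amalg_simps intro!: J.a_inv_closed)
  next
    fix h1 h2 assume "h1 \<in> ?S" "h2 \<in> ?S"
    then obtain a j c k where h: "h1 = (a, f a \<oplus>\<^bsub>B\<^esub> j)" "a \<in> carrier A" "j \<in> J"
       "h2 = (c, f c \<oplus>\<^bsub>B\<^esub> k)" "c \<in> carrier A" "k \<in> J"
      by (auto simp: amalg_simps)
    have jc: "j \<in> carrier B" "k \<in> carrier B" using h J.Icarr by blast+
    have fc: "f a \<in> carrier B" "f c \<in> carrier B" using h by auto
    have "h1 \<otimes>\<^bsub>RDirProd A B\<^esub> h2 = (a \<otimes>\<^bsub>A\<^esub> c, f (a \<otimes>\<^bsub>A\<^esub> c) \<oplus>\<^bsub>B\<^esub>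
        ((f a \<otimes>\<^bsub>B\<^esub> k \<oplus>\<^bsub>B\<^esub> j \<otimes>\<^bsub>B\<^esub> f c) \<oplus>\<^bsub>B\<^esub> j \<otimes>\<^bsub>B\<^esub> k))"
    proof -
      have "(f a \<oplus>\<^bsub>B\<^esub> j) \<otimes>\<^bsub>B\<^esub> (f c \<oplus>\<^bsub>B\<^esub> k) = f a \<otimes>\<^bsub>B\<^esub> f c \<oplus>\<^bsub>B\<^esub>
        ((f a \<otimes>\<^bsub>B\<^esub> k \<oplus>\<^bsub>B\<^esub> j \<otimes>\<^bsub>B\<^esub> f c) \<oplus>\<^bsub>B\<^esub> j \<otimes>\<^bsub>B\<^esub> k)"
        using jc fc by algebra
      then show ?thesis using h by (simp add: RDP_ops)
    qed
    moreover have "(f a \<otimes>\<^bsub>B\<^esub> k \<oplus>\<^bsub>B\<^esub> j \<otimes>\<^bsub>B\<^esub> f c) \<oplus>\<^bsub>B\<^esub> j \<otimes>\<^bsub>B\<^esub> k \<in> J"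
      using h jc fc by (intro J.a_closed J.I_l_closed J.I_r_closed) auto
    ultimately show "h1 \<otimes>\<^bsub>RDirProd A B\<^esub> h2 \<in> ?S"
      using h by (auto simp: amalg_simps)
    have "h1 \<oplus>\<^bsub>RDirProd A B\<^esub> h2 = (a \<oplus>\<^bsub>A\<^esub> c, f (a \<oplus>\<^bsub>A\<^esub> c) \<oplus>\<^bsub>B\<^esub> (j \<oplus>\<^bsub>B\<^esub> k))"
    proof -
      have "(f a \<oplus>\<^bsub>B\<^esub> j) \<oplus>\<^bsub>B\<^esub> (f c \<oplus>\<^bsub>B\<^esub> k) = f a \<oplus>\<^bsub>B\<^esub> f c \<oplus>\<^bsub>B\<^esub> (j \<oplus>\<^bsub>B\<^esub> k)"
        using jc fc by algebra
      then show ?thesis using h by (simp add: RDP_ops)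
    qed
    then show "h1 \<oplus>\<^bsub>RDirProd A B\<^esub> h2 \<in> ?S"
      using h by (auto simp: amalg_simps intro!: J.a_closed)
    show "h1 \<otimes>\<^bsub>RDirProd A B\<^esub> h2 = h2 \<otimes>\<^bsub>RDirProd A B\<^esub> h1"
      using h jc fc by (simp add: RDP_ops A.m_comm B.m_comm)
  qed
  then have "cring ((RDirProd A B) \<lparr> carrier := ?S \<rparr>)"
    using P.subcring_iff[OF sub] by blast
  then show ?thesis using amalg_eq by metis
qed


lemma krull_exists:
  assumes "cring R" "a \<in> carrier R" "a \<notin> Units R"
  shows "\<exists>M. maximalideal M R \<and> a \<in> M"
proof -
  interpret R: cring R by fact
  define AA where "AA = {I. ideal I R \<and> a \<in> I \<and> \<one>\<^bsub>R\<^esub> \<notin> I}"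
  have one_not: "\<one>\<^bsub>R\<^esub> \<notin> I" if "ideal I R" "I \<noteq> carrier R" for I
    using ideal.one_imp_carrier[OF that(1)] that(2) by blast
  have "PIdl\<^bsub>R\<^esub> a \<in> AA"
  proof -
    have "carrier R \<noteq> PIdl\<^bsub>R\<^esub> a" using R.ideal_eq_carrier_iff[OF assms(2)] assms(3) by blast
    then show ?thesis unfolding AA_def
      using R.cgenideal_ideal[OF assms(2)] R.cgenideal_self[OF assms(2)] one_not by auto
  qed
  then have "AA \<noteq> {}" by blast
  moreover have "\<Union>C \<in> AA" if "C \<noteq> {}" "subset.chain AA C" for C
  proof -
    have "subset.chain {I. ideal I R} C"
      using that(2) unfolding pred_on.chain_def AA_def by blast
    then have "ideal (\<Union>C) R" using R.chain_Union_is_ideal[of C] that(1) by simp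
    moreover have "C \<subseteq> AA" using that(2) unfolding pred_on.chain_def by blast
    ultimately show ?thesis using that(1) unfolding AA_def by blast
  qed
  ultimately obtain M where M: "M \<in> AA" "\<forall>X\<in>AA. M \<subseteq> X \<longrightarrow> X = M"
    using subset_Zorn_nonempty[of AA] by blast
  have "maximalideal M R"
  proof (rule maximalidealI)
    show "ideal M R" using M unfolding AA_def by blast
    show "carrier R \<noteq> M" using M unfolding AA_def by auto
    fix J assume J: "ideal J R" "M \<subseteq> J" "J \<subseteq> carrier R"
    show "J = M \<or> J = carrier R"
    proof (cases "\<one>\<^bsub>R\<^esub> \<in> J")
      case True then show ?thesis using ideal.one_imp_carrier[OF J(1)] by blast
    next
      case False
      then have "J \<in> AA" using J M(1) unfolding AA_def by blast
      then show ?thesis using M(2) J(2) by blast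
    qed
  qed
  then show ?thesis using M(1) unfolding AA_def by blast
qed

lemma jac_unit:
  assumes "cring R" "x \<in> jacobson_radical R" "x \<in> carrier R"
  shows "\<one>\<^bsub>R\<^esub> \<oplus>\<^bsub>R\<^esub> x \<in> Units R"
proof (rule ccontr)
  interpret R: cring R by fact
  assume "\<one>\<^bsub>R\<^esub> \<oplus>\<^bsub>R\<^esub> x \<notin> Units R"
  then obtain M where M: "maximalideal M R" "\<one>\<^bsub>R\<^esub> \<oplus>\<^bsub>R\<^esub> x \<in> M"
    using krull_exists[OF assms(1)] assms(3) by blast
  interpret M: maximalideal M R by fact
  have "x \<in> M" using assms(2) M(1) unfolding jacobson_radical_def by blast
  then have "(\<one>\<^bsub>R\<^esub> \<oplus>\<^bsub>R\<^esub> x) \<ominus>\<^bsub>R\<^esub> x \<in> M"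
    using M.a_closed[OF M(2) M.a_inv_closed[OF \<open>x \<in> M\<close>]] unfolding a_minus_def by simp
  moreover have "(\<one>\<^bsub>R\<^esub> \<oplus>\<^bsub>R\<^esub> x) \<ominus>\<^bsub>R\<^esub> x = \<one>\<^bsub>R\<^esub>"
    using assms(3) by algebra
  ultimately have "\<one>\<^bsub>R\<^esub> \<in> M" by simp
  then show False using M.one_imp_carrier M.I_notcarr by blast
qed


lemma total_pruefer:
  assumes "total_ring_of_fractions R"
  shows "pruefer_ring R"
  unfolding pruefer_ring_def
proof (intro conjI allI impI)
  interpret R: cring R using assms unfolding total_ring_of_fractions_def by blast
  show "cring R" by (rule R.is_cring)
  fix I assume H: "ideal I R \<and> (\<exists>S. finite S \<and> S \<subseteq> carrier R \<and> I = Idl\<^bsub>R\<^esub> S) \<and> (\<exists>d\<in>I. non_zerodivisor R d)"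
  then obtain d where d: "d \<in> I" "non_zerodivisor R d" and I: "ideal I R" by blast
  have dc: "d \<in> carrier R" using d(2) unfolding non_zerodivisor_def by blast
  have "\<not> zerodivisor R d" using d(2) unfolding non_zerodivisor_def zerodivisor_def by blast
  then have "d \<in> Units R" using assms dc unfolding total_ring_of_fractions_def by blast
  then have "inv\<^bsub>R\<^esub> d \<otimes>\<^bsub>R\<^esub> d \<in> I" using ideal.I_l_closed[OF I d(1)] by blast
  then have "\<one>\<^bsub>R\<^esub> \<in> I" using \<open>d \<in> Units R\<close> by simp
  then have Ic: "I = carrier R" using ideal.one_imp_carrier[OF I] by blast
  have "non_zerodivisor R \<one>\<^bsub>R\<^esub>" unfolding non_zerodivisor_def by simp
  moreover have "I \<cdot>\<^bsub>R\<^esub> carrier R = PIdl\<^bsub>R\<^esub> \<one>\<^bsub>R\<^esub>"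
  proof -
    have "PIdl\<^bsub>R\<^esub> \<one>\<^bsub>R\<^esub> = carrier R" unfolding cgenideal_def by force
    then show ?thesis using R.ideal_prod_one[OF I] Ic by simp
  qed
  ultimately show "invertible_ideal R I"
    unfolding invertible_ideal_def using R.oneideal by blast
qed


lemma amalg_total:
  fixes A :: "('a, 'c) ring_scheme" and B :: "('b, 'd) ring_scheme"
    and f :: "'a \<Rightarrow> 'b" and J :: "'b set"
  assumes tA: "total_ring_of_fractions A"
    and cB: "cring B"
    and hf: "f \<in> ring_hom A B"
    and iJ: "ideal J B"
    and jac: "J \<subseteq> jacobson_radical B"
    and cond: "J \<subseteq> f ` carrier A \<or> torsion_via A B f J"
  shows "total_ring_of_fractions (amalgamation A B f J)"
  unfolding total_ring_of_fractions_def
proof (intro conjI ballI)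
  interpret A: cring A using tA unfolding total_ring_of_fractions_def by blast
  interpret B: cring B by fact
  interpret f: ring_hom_cring A B f unfolding ring_hom_cring_def ring_hom_cring_axioms_def
    using A.is_cring cB hf by blast
  interpret J: ideal J B by fact
  have z0: "\<zero>\<^bsub>B\<^esub> \<in> J" using additive_subgroup.zero_closed[OF ideal.axioms(1)[OF iJ]] .
  show "cring (amalgamation A B f J)" using amalg_cring A.is_cring cB hf iJ by blast
  fix x assume "x \<in> carrier (amalgamation A B f J)"
  then obtain a j where x: "x = (a, f a \<oplus>\<^bsub>B\<^esub> j)" "a \<in> carrier A" "j \<in> J"
    by (auto simp: amalg_simps)
  have jc: "j \<in> carrier B" using x J.Icarr by blast
  have xc: "x \<in> carrier (amalgamation A B f J)" using x by (auto simp: amalg_simps)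
  have "a \<in> Units A \<or> zerodivisor A a" using tA x(2) unfolding total_ring_of_fractions_def by blast
  then show "x \<in> Units (amalgamation A B f J) \<or> zerodivisor (amalgamation A B f J) x"
  proof
    assume au: "a \<in> Units A"
    define u where "u = inv\<^bsub>A\<^esub> a"
    have uc: "u \<in> carrier A" and ua: "u \<otimes>\<^bsub>A\<^esub> a = \<one>\<^bsub>A\<^esub>" and au': "a \<otimes>\<^bsub>A\<^esub> u = \<one>\<^bsub>A\<^esub>"
      using au unfolding u_def by auto
    have fua: "f u \<otimes>\<^bsub>B\<^esub> f a = \<one>\<^bsub>B\<^esub>"
      using f.hom_mult[OF uc x(2), symmetric] ua f.hom_one by simp
    have fuc: "f u \<in> carrier B" "f a \<in> carrier B" using uc x(2) by auto
    define j' where "j' = f u \<otimes>\<^bsub>B\<^esub> j"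
    have j'J: "j' \<in> J" unfolding j'_def using J.I_l_closed[OF x(3) fuc(1)] .
    have j'c: "j' \<in> carrier B" using j'J J.Icarr by blast
    have wU: "\<one>\<^bsub>B\<^esub> \<oplus>\<^bsub>B\<^esub> j' \<in> Units B" using jac_unit[OF cB] j'J jac j'c by blast
    define b where "b = f a \<oplus>\<^bsub>B\<^esub> j"
    have bc: "b \<in> carrier B" unfolding b_def using fuc jc by simp
    have beq: "b = f a \<otimes>\<^bsub>B\<^esub> (\<one>\<^bsub>B\<^esub> \<oplus>\<^bsub>B\<^esub> j')"
    proof -
      have "f a \<otimes>\<^bsub>B\<^esub> (\<one>\<^bsub>B\<^esub> \<oplus>\<^bsub>B\<^esub> j') = f a \<oplus>\<^bsub>B\<^esub> (f u \<otimes>\<^bsub>B\<^esub> f a) \<otimes>\<^bsub>B\<^esub> j"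
        unfolding j'_def using fuc jc by algebra
      then show ?thesis using fua fuc jc unfolding b_def by simp
    qed
    have faU: "f a \<in> Units B" unfolding Units_def using fua fuc B.m_comm[OF fuc] by auto
    have bU: "b \<in> Units B" unfolding beq by (rule B.Units_m_closed[OF faU wU])
    define v where "v = inv\<^bsub>B\<^esub> b"
    have vc: "v \<in> carrier B" and vb: "v \<otimes>\<^bsub>B\<^esub> b = \<one>\<^bsub>B\<^esub>" and bv: "b \<otimes>\<^bsub>B\<^esub> v = \<one>\<^bsub>B\<^esub>"
      using bU unfolding v_def by auto
    define k where "k = \<ominus>\<^bsub>B\<^esub> (v \<otimes>\<^bsub>B\<^esub> f u \<otimes>\<^bsub>B\<^esub> j)"
    have kJ: "k \<in> J" unfolding k_def
      using J.a_inv_closed[OF J.I_l_closed[OF x(3) B.m_closed[OF vc fuc(1)]]] .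
    have veq: "v = f u \<oplus>\<^bsub>B\<^esub> k"
    proof -
      have "v = v \<otimes>\<^bsub>B\<^esub> (f u \<otimes>\<^bsub>B\<^esub> f a)" using fua vc by simp
      also have "\<dots> = f u \<otimes>\<^bsub>B\<^esub> (v \<otimes>\<^bsub>B\<^esub> (f a \<oplus>\<^bsub>B\<^esub> j)) \<oplus>\<^bsub>B\<^esub> \<ominus>\<^bsub>B\<^esub> (v \<otimes>\<^bsub>B\<^esub> f u \<otimes>\<^bsub>B\<^esub> j)"
        using vc fuc jc by algebra
      also have "\<dots> = f u \<oplus>\<^bsub>B\<^esub> k" using vb fuc unfolding b_def k_def by simp
      finally show ?thesis .
    qed
    have yc: "(u, v) \<in> carrier (amalgamation A B f J)"
      using uc kJ veq by (auto simp: amalg_simps)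
    have xb: "x = (a, b)" using x(1) unfolding b_def .
    have m1: "(u, v) \<otimes>\<^bsub>amalgamation A B f J\<^esub> x = \<one>\<^bsub>amalgamation A B f J\<^esub>"
      unfolding xb by (simp add: amalg_simps RDP_ops ua vb)
    have m2: "x \<otimes>\<^bsub>amalgamation A B f J\<^esub> (u, v) = \<one>\<^bsub>amalgamation A B f J\<^esub>"
      unfolding xb by (simp add: amalg_simps RDP_ops au' bv)
    have "x \<in> Units (amalgamation A B f J)"
      unfolding Units_def using xc yc m1 m2 by blast
    then show ?thesis by blast
  next
    assume "zerodivisor A a"
    then obtain y where y: "y \<in> carrier A" "y \<noteq> \<zero>\<^bsub>A\<^esub>" "a \<otimes>\<^bsub>A\<^esub> y = \<zero>\<^bsub>A\<^esub>"
      unfolding zerodivisor_def by blast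
    have ex: "\<exists>w\<in>carrier (amalgamation A B f J). w \<noteq> \<zero>\<^bsub>amalgamation A B f J\<^esub> \<and>
                 x \<otimes>\<^bsub>amalgamation A B f J\<^esub> w = \<zero>\<^bsub>amalgamation A B f J\<^esub>"
      using cond
    proof
      assume "J \<subseteq> f ` carrier A"
      then obtain c where c: "c \<in> carrier A" "j = f c" using x(3) by blast
      show ?thesis
      proof (cases "y \<otimes>\<^bsub>A\<^esub> c = \<zero>\<^bsub>A\<^esub>")
        case True
        have wc: "(y, f y) \<in> carrier (amalgamation A B f J)"
          using y z0 by (auto simp: amalg_simps intro!: exI[of _ "\<zero>\<^bsub>B\<^esub>"])
        have "(f a \<oplus>\<^bsub>B\<^esub> f c) \<otimes>\<^bsub>B\<^esub> f y = f (a \<otimes>\<^bsub>A\<^esub> y \<oplus>\<^bsub>A\<^esub> y \<otimes>\<^bsub>A\<^esub> c)"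
        proof -
          have e: "f (a \<otimes>\<^bsub>A\<^esub> y \<oplus>\<^bsub>A\<^esub> y \<otimes>\<^bsub>A\<^esub> c) = f a \<otimes>\<^bsub>B\<^esub> f y \<oplus>\<^bsub>B\<^esub> f y \<otimes>\<^bsub>B\<^esub> f c"
            by (simp only: f.hom_add[OF A.m_closed[OF x(2) y(1)] A.m_closed[OF y(1) c(1)]]
                f.hom_mult[OF x(2) y(1)] f.hom_mult[OF y(1) c(1)])
          have "f a \<in> carrier B" "f y \<in> carrier B" "f c \<in> carrier B" using x(2) c y by auto
          then have "(f a \<oplus>\<^bsub>B\<^esub> f c) \<otimes>\<^bsub>B\<^esub> f y = f a \<otimes>\<^bsub>B\<^esub> f y \<oplus>\<^bsub>B\<^esub> f y \<otimes>\<^bsub>B\<^esub> f c"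
            by algebra
          then show ?thesis using e by simp
        qed
        also have "\<dots> = \<zero>\<^bsub>B\<^esub>" using True y by simp
        finally have "(f a \<oplus>\<^bsub>B\<^esub> f c) \<otimes>\<^bsub>B\<^esub> f y = \<zero>\<^bsub>B\<^esub>" .
        then have pr: "x \<otimes>\<^bsub>amalgamation A B f J\<^esub> (y, f y) = \<zero>\<^bsub>amalgamation A B f J\<^esub>"
          unfolding x(1) c(2) by (simp add: amalg_simps RDP_ops y(3))
        have nz: "(y, f y) \<noteq> \<zero>\<^bsub>amalgamation A B f J\<^esub>" using y(2) by (simp add: amalg_simps RDP_ops)
        show ?thesis using wc pr nz by blast

      next
        case False
        have yc: "y \<otimes>\<^bsub>A\<^esub> c \<in> carrier A" using y c by simp
        have "f (y \<otimes>\<^bsub>A\<^esub> c) \<in> J" using J.I_l_closed[OF x(3), of "f y"] y c by simp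
        then have wc: "(y \<otimes>\<^bsub>A\<^esub> c, \<zero>\<^bsub>B\<^esub>) \<in> carrier (amalgamation A B f J)"
          using yc by (auto simp: amalg_simps B.r_neg[OF f.hom_closed[OF yc]] intro!: exI[of _ "\<ominus>\<^bsub>B\<^esub> f (y \<otimes>\<^bsub>A\<^esub> c)"] exI[of _ "y \<otimes>\<^bsub>A\<^esub> c"] J.a_inv_closed)
        have "a \<otimes>\<^bsub>A\<^esub> (y \<otimes>\<^bsub>A\<^esub> c) = \<zero>\<^bsub>A\<^esub>" using y c x(2) by (simp add: A.m_assoc[symmetric])
        then have pr: "x \<otimes>\<^bsub>amalgamation A B f J\<^esub> (y \<otimes>\<^bsub>A\<^esub> c, \<zero>\<^bsub>B\<^esub>) = \<zero>\<^bsub>amalgamation A B f J\<^esub>"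
          unfolding x(1) using x(2) jc by (simp add: amalg_simps RDP_ops)
        have nz: "(y \<otimes>\<^bsub>A\<^esub> c, \<zero>\<^bsub>B\<^esub>) \<noteq> \<zero>\<^bsub>amalgamation A B f J\<^esub>" using False by (simp add: amalg_simps RDP_ops)
        show ?thesis using wc pr nz by blast

      qed
    next
      assume "torsion_via A B f J"
      then obtain s where s: "non_zerodivisor A s" "f s \<otimes>\<^bsub>B\<^esub> j = \<zero>\<^bsub>B\<^esub>"
        using x(3) unfolding torsion_via_def by blast
      have sc: "s \<in> carrier A" using s unfolding non_zerodivisor_def by blast
      have ysnz: "y \<otimes>\<^bsub>A\<^esub> s \<noteq> \<zero>\<^bsub>A\<^esub>"
        using s(1) y sc A.m_comm unfolding non_zerodivisor_def by metis
      have ysc: "y \<otimes>\<^bsub>A\<^esub> s \<in> carrier A" using y sc by simp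
      have wc: "(y \<otimes>\<^bsub>A\<^esub> s, f (y \<otimes>\<^bsub>A\<^esub> s)) \<in> carrier (amalgamation A B f J)"
        using ysc z0 by (auto simp: amalg_simps intro!: exI[of _ "\<zero>\<^bsub>B\<^esub>"])
      have "(f a \<oplus>\<^bsub>B\<^esub> j) \<otimes>\<^bsub>B\<^esub> f (y \<otimes>\<^bsub>A\<^esub> s) =
            (f a \<otimes>\<^bsub>B\<^esub> f y) \<otimes>\<^bsub>B\<^esub> f s \<oplus>\<^bsub>B\<^esub> f y \<otimes>\<^bsub>B\<^esub> (f s \<otimes>\<^bsub>B\<^esub> j)"
      proof -
        have "f a \<in> carrier B" "f y \<in> carrier B" "f s \<in> carrier B" using x(2) y sc by auto
        then have "(f a \<oplus>\<^bsub>B\<^esub> j) \<otimes>\<^bsub>B\<^esub> (f y \<otimes>\<^bsub>B\<^esub> f s) =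
            (f a \<otimes>\<^bsub>B\<^esub> f y) \<otimes>\<^bsub>B\<^esub> f s \<oplus>\<^bsub>B\<^esub> f y \<otimes>\<^bsub>B\<^esub> (f s \<otimes>\<^bsub>B\<^esub> j)"
          using jc by algebra
        then show ?thesis using x(2) y sc by simp
      qed
      also have "\<dots> = \<zero>\<^bsub>B\<^esub>" using y s sc f.hom_mult[OF x(2) y(1), symmetric] by simp
      finally have "(f a \<oplus>\<^bsub>B\<^esub> j) \<otimes>\<^bsub>B\<^esub> f (y \<otimes>\<^bsub>A\<^esub> s) = \<zero>\<^bsub>B\<^esub>" .
      moreover have "a \<otimes>\<^bsub>A\<^esub> (y \<otimes>\<^bsub>A\<^esub> s) = \<zero>\<^bsub>A\<^esub>" using y sc x(2) by (simp add: A.m_assoc[symmetric])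
      ultimately have pr: "x \<otimes>\<^bsub>amalgamation A B f J\<^esub> (y \<otimes>\<^bsub>A\<^esub> s, f (y \<otimes>\<^bsub>A\<^esub> s)) = \<zero>\<^bsub>amalgamation A B f J\<^esub>"
        unfolding x(1) by (simp add: amalg_simps RDP_ops)
      have nz: "(y \<otimes>\<^bsub>A\<^esub> s, f (y \<otimes>\<^bsub>A\<^esub> s)) \<noteq> \<zero>\<^bsub>amalgamation A B f J\<^esub>" using ysnz by (simp add: amalg_simps RDP_ops)
      show ?thesis using wc pr nz by blast

    qed
    then show ?thesis unfolding zerodivisor_def using xc by blast
  qed
qed


theorem proposition4p6:
  fixes A :: "('a, 'c) ring_scheme" and B :: "('b, 'd) ring_scheme"
    and f :: "'a \<Rightarrow> 'b" and J :: "'b set"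
  assumes "total_ring_of_fractions A"
    and "cring B"
    and "f \<in> ring_hom A B"
    and "ideal J B"
    and "J \<subseteq> jacobson_radical B"
    and "J \<subseteq> f ` carrier A \<or> torsion_via A B f J"
  shows "total_ring_of_fractions (amalgamation A B f J) \<and> pruefer_ring (amalgamation A B f J)"
proof -
  have "total_ring_of_fractions (amalgamation A B f J)"
    using amalg_total[OF assms] .
  then show ?thesis using total_pruefer by blast
qed

end
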